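(* Let $x,y\in\mathbb{R}[X]$ with $\deg x\le 1$ and $\deg y\le 1$, and let $\gamma\in\mathbb{R}[X]$ be a polynomial without real roots such that $p=x/\gamma$ and $q=y/\gamma$ lie in $D$. Then $\begin{pmatrix} p & q\\ 0 & 0\end{pmatrix}$ is a product of idempotent $2\times 2$ matrices over $D$.
   Context: $D$ denotes the minimal Dress ring of the field $\mathbb{R}(X)$, i.e. the subring of $\mathbb{R}(X)$ generated by $\mathbb{Z}$ and all elements $1/(1+h^2)$ with $h\in\mathbb{R}(X)$. A matrix $E$ is idempotent if $E^2=E$. *)

theory Defs
  imports "HOL-Analysis.Analysis" "HOL-Computational_Algebra.Polynomial" "HOL-Computational_Algebra.Fraction_Field"
begin

text \<open>The field R(X) of real rational functions is modelled as the fraction field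
  of real polynomials; a polynomial f is embedded as Fract f 1.\<close>

type_synonym ratfun = "real poly fract"

definition poly_to_ratfun :: "real poly \<Rightarrow> ratfun" where
  "poly_to_ratfun f = Fract f 1"

text \<open>Minimal Dress ring: the subring of R(X) generated by the integers and
  all elements 1/(1+h^2).\<close>
inductive_set dress_ring :: "ratfun set" where
  int: "of_int k \<in> dress_ring"
| gen: "inverse (1 + h^2) \<in> dress_ring"
| add: "a \<in> dress_ring \<Longrightarrow> b \<in> dress_ring \<Longrightarrow> a + b \<in> dress_ring"
| neg: "a \<in> dress_ring \<Longrightarrow> - a \<in> dress_ring"
| mult: "a \<in> dress_ring \<Longrightarrow> b \<in> dress_ring \<Longrightarrow> a * b \<in> dress_ring"

definition mat_over :: "'a set \<Rightarrow> 'a ^ 2 ^ 2 \<Rightarrow> bool" where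
  "mat_over S A \<longleftrightarrow> (\<forall>i j. A $ i $ j \<in> S)"

definition idempotent_mat :: "'a::semiring_1 ^ 'n ^ 'n \<Rightarrow> bool" where
  "idempotent_mat E \<longleftrightarrow> E ** E = E"

text \<open>A is a product of idempotent 2x2 matrices with entries in S.\<close>
definition prod_of_idempotents_over :: "'a::semiring_1 set \<Rightarrow> 'a ^ 2 ^ 2 \<Rightarrow> bool" where
  "prod_of_idempotents_over S A \<longleftrightarrow>
     (\<exists>Es. Es \<noteq> [] \<and> (\<forall>E \<in> set Es. mat_over S E \<and> idempotent_mat E)
           \<and> A = foldr (**) Es (mat 1))"

end

theory Submission imports Defs "HOL-Computational_Algebra.Fundamental_Theorem_Algebra" begin

abbreviation D where "D \<equiv> dress_ring"

definition rc :: "real \<Rightarrow> ratfun" where "rc c = Fract [:c:] 1"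

lemma rc_add: "rc (a + b) = rc a + rc b" by (simp add: rc_def)
lemma rc_mult: "rc (a * b) = rc a * rc b" by (simp add: rc_def) (simp add: mult.commute)
lemma rc_minus: "rc (- a) = - rc a" by (simp add: rc_def)
lemma rc_diff: "rc (a - b) = rc a - rc b" by (simp add: rc_def)
lemma rc_1: "rc 1 = 1" by (simp add: rc_def) (metis One_fract_def one_pCons)
lemma rc_0: "rc 0 = 0" by (simp add: rc_def fract_collapse)
lemma rc_inverse: "rc (inverse a) = inverse (rc a)"
  by (cases "a = 0") (auto simp: rc_def eq_fract fract_collapse)

lemma of_int_fract: "(of_int k :: ratfun) = Fract (of_int k) 1"
proof (cases "k \<ge> 0")
  case True
  then obtain n where "k = int n" by (metis nonneg_eq_int)
  then show ?thesis by (simp add: of_nat_fract)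
next
  case False
  then obtain n where "k = - int n" by (metis le_cases neg_0_le_iff_le nonneg_eq_int minus_minus)
  then show ?thesis by (simp add: of_nat_fract)
qed

lemma D_add: "a \<in> D \<Longrightarrow> b \<in> D \<Longrightarrow> a + b \<in> D" by (rule dress_ring.add)
lemma D_mult: "a \<in> D \<Longrightarrow> b \<in> D \<Longrightarrow> a * b \<in> D" by (rule dress_ring.mult)
lemma D_neg: "a \<in> D \<Longrightarrow> - a \<in> D" by (rule dress_ring.neg)
lemma D_diff: "a \<in> D \<Longrightarrow> b \<in> D \<Longrightarrow> a - b \<in> D"
  using D_add D_neg by (metis diff_conv_add_uminus)
lemma D_0: "0 \<in> D" using dress_ring.int[of 0] by simp
lemma D_1: "1 \<in> D" using dress_ring.int[of 1] by simp

lemma D_rc_pos: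
  assumes "c > 0" shows "rc c \<in> D"
proof -
  define m :: nat where "m = nat \<lceil>c\<rceil> + 1"
  have m: "real m \<ge> c" "real m > 0" unfolding m_def by linarith+
  define t where "t = sqrt (real m / c - 1)"
  have "real m / c \<ge> 1" using m assms by (simp add: field_simps)
  hence t2: "t^2 = real m / c - 1" unfolding t_def by simp
  have "inverse (1 + (rc t)^2) = rc (c / real m)"
    using t2 assms m by (simp add: power2_eq_square rc_1[symmetric] rc_mult[symmetric] rc_add[symmetric] rc_inverse[symmetric])
  moreover have "rc c = of_int (int m) * rc (c / real m)"
    using m by (simp add: of_int_fract rc_def of_int_poly)
  ultimately show ?thesis
    by (metis D_mult dress_ring.gen dress_ring.int)
qed

lemma D_rc: "rc c \<in> D"
proof -
  consider "c > 0" | "c = 0" | "c < 0" by linarith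
  then show ?thesis
  proof cases
    case 3 then have "rc (- c) \<in> D" by (intro D_rc_pos) auto
    then show ?thesis by (metis D_neg minus_minus rc_minus)
  qed (auto simp: D_rc_pos rc_0 D_0)
qed

lemma fract_add_same: "W \<noteq> 0 \<Longrightarrow> Fract a W + Fract b W = Fract (a + b) W"
  by (simp add: eq_fract algebra_simps)

lemma rc_mult_fract: "rc c * Fract a b = Fract ([:c:] * a) b"
  by (simp add: rc_def)

lemma deg1_form: "degree (v::real poly) \<le> 1 \<Longrightarrow> v = [:coeff v 0, coeff v 1:]"
  by (auto simp: poly_eq_iff coeff_pCons coeff_eq_0 split: nat.split)

lemma poly_eqI_real: "(\<And>z. poly p z = poly q (z::real)) \<Longrightarrow> p = q"
  using poly_eq_poly_eq_iff by blast

lemma D_quad: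
  fixes s t :: real
  assumes t: "t \<noteq> 0" and v: "degree v \<le> 1"
  defines "u \<equiv> [:s, t:]"
  defines "W \<equiv> 1 + u * u"
  shows "Fract v W \<in> D"
proof -
  have degu: "degree u = 1" using t by (simp add: u_def)
  have degW: "degree W = 2"
  proof -
    have "degree (u*u) = 2" using degu t by (subst degree_mult_eq) (auto simp: u_def)
    then show ?thesis unfolding W_def by (subst degree_add_eq_right) auto
  qed
  hence W0: "W \<noteq> 0" by auto
  have u1: "u + 1 \<noteq> 0"
  proof
    assume "u + 1 = 0" hence "degree (u + 1) = 0" by simp
    moreover have "degree (u + 1) = 1" using degu by (subst degree_add_eq_left) auto
    ultimately show False by simp
  qed
  have A: "Fract 1 W \<in> D"
  proof -
    have "inverse (1 + (Fract u 1)^2) = Fract 1 W"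
      by (simp add: power2_eq_square W_def One_fract_def)
    then show ?thesis by (metis dress_ring.gen)
  qed
  have B: "Fract u W \<in> D"
  proof -
    have sq0: "(u+1)*(u+1) + (u-1)*(u-1) \<noteq> 0"
    proof -
      have "(u+1)*(u+1) + (u-1)*(u-1) = [:2:] * W"
        by (rule poly_eqI_real) (simp add: W_def algebra_simps)
      then show ?thesis using W0 by simp
    qed
    have "inverse (1 + (Fract (u - 1) (u + 1))^2) = Fract ((u+1)*(u+1)) ((u+1)*(u+1) + (u-1)*(u-1))"
      using u1 by (simp add: power2_eq_square One_fract_def)
    also have "\<dots> = rc (1/2) + Fract u W"
    proof -
      have e: "Fract [:1/2:] 1 + Fract u W = Fract ([:1/2:]*W + u) W" using W0 by simp
      show ?thesis unfolding rc_def e using W0 sq0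
        apply (subst eq_fract(1)) apply simp apply simp
        by (rule poly_eqI_real) (simp add: W_def algebra_simps)
    qed
    finally have "rc (1/2) + Fract u W \<in> D" by (metis dress_ring.gen)
    then have "rc (1/2) + Fract u W - rc (1/2) \<in> D" by (intro D_diff D_rc)
    then show ?thesis by simp
  qed
  have "Fract v W = rc (coeff v 0 - coeff v 1 * s / t) * Fract 1 W + rc (coeff v 1 / t) * Fract u W"
    unfolding rc_mult_fract
    apply (subst fract_add_same[OF W0])
    apply (subst deg1_form[OF v])
    apply (rule arg_cong[where f="\<lambda>z. Fract z W"])
    apply (rule poly_eqI_real)
    using t by (simp add: u_def field_simps)
  then show ?thesis using A B D_rc D_mult D_add by metis
qed

abbreviation mpc :: "real poly \<Rightarrow> complex poly" where "mpc \<equiv> map_poly complex_of_real"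

lemma mpc_add: "mpc (p + q) = mpc p + mpc q"
  by (simp add: poly_eq_iff coeff_map_poly)

lemma mpc_smult: "mpc (smult a q) = smult (of_real a) (mpc q)"
  by (simp add: poly_eq_iff coeff_map_poly)

lemma poly_mpc_mult: "poly (mpc (p * q)) z = poly (mpc p) z * poly (mpc q) z"
proof (induction p)
  case 0 then show ?case by simp
next
  case (pCons a p)
  have "poly (mpc (pCons a p * q)) z = poly (mpc (smult a q) + mpc (pCons 0 (p * q))) z"
    by (simp add: mpc_add[symmetric])
  also have "\<dots> = of_real a * poly (mpc q) z + z * poly (mpc (p*q)) z"
    by (simp add: mpc_smult map_poly_pCons)
  also have "\<dots> = poly (mpc (pCons a p)) z * poly (mpc q) z"
    using pCons.IH by (simp add: map_poly_pCons algebra_simps)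
  finally show ?case .
qed

lemma poly_mpc_real: "poly (mpc p) (of_real x) = of_real (poly p x)"
  by (induction p) (auto simp: map_poly_pCons)

lemma quad_factor:
  fixes g :: "real poly"
  assumes nr: "\<forall>x. poly g x \<noteq> 0" and dg: "degree g > 0"
  shows "\<exists>s t g'. t \<noteq> 0 \<and> g = (1 + [:s,t:] * [:s,t:]) * g'"
proof -
  have "degree (mpc g) = degree g" by (rule degree_map_poly) simp
  then obtain z where z: "poly (mpc g) z = 0" using dg alg_closed_imp_poly_has_root by metis
  define a where "a = Re z"
  define b where "b = Im z"
  have b0: "b \<noteq> 0"
  proof
    assume "b = 0"
    then have "z = of_real a" by (simp add: a_def b_def complex_eq_iff)
    then have "of_real (poly g a) = (0::complex)" using z poly_mpc_real by metis
    then show False using nr by simp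
  qed
  define Q where "Q = [:a*a+b*b, -2*a, 1:]"
  have Q0: "Q \<noteq> 0" by (simp add: Q_def)
  have dQ: "degree Q = 2" by (simp add: Q_def)
  have Qz: "poly (mpc Q) z = 0"
    by (simp add: Q_def map_poly_pCons complex_eq_iff a_def b_def algebra_simps power2_eq_square)
  define r where "r = g mod Q"
  have gd: "g = g div Q * Q + r" by (simp add: r_def)
  have "poly (mpc g) z = poly (mpc (g div Q)) z * poly (mpc Q) z + poly (mpc r) z"
    by (subst gd) (simp add: mpc_add poly_mpc_mult)
  hence rz: "poly (mpc r) z = 0" using z Qz by simp
  have "r = 0 \<or> degree r < 2" using degree_mod_less[OF Q0, of g] dQ r_def by auto
  hence "degree r \<le> 1" by auto
  hence rf: "r = [:coeff r 0, coeff r 1:]" by (rule deg1_form)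
  have "of_real (coeff r 0) + of_real (coeff r 1) * z = 0"
    using rz by (subst (asm) rf) (simp add: map_poly_pCons mult.commute)
  hence "coeff r 0 + coeff r 1 * a = 0" "coeff r 1 * b = 0"
    by (simp_all add: complex_eq_iff a_def b_def)
  hence "coeff r 0 = 0" "coeff r 1 = 0" using b0 by auto
  hence "r = 0" using rf by simp
  hence "g = g div Q * Q" using gd by simp
  moreover have "Q = (1 + [:-a/b, 1/b:] * [:-a/b, 1/b:]) * [:b*b:]"
    by (rule poly_eqI_real) (use b0 in \<open>simp add: Q_def field_simps\<close>)
  ultimately have gf: "g = (1 + [:-a/b, 1/b:] * [:-a/b, 1/b:]) * ([:b*b:] * (g div Q))"
    by (metis mult.assoc mult.commute)
  have "1/b \<noteq> 0" using b0 by simp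
  then show ?thesis using gf by blast
qed

lemma deg0_form: "degree (v::real poly) = 0 \<Longrightarrow> v = [:coeff v 0:]"
  by (auto simp: poly_eq_iff coeff_pCons coeff_eq_0 split: nat.split)

lemma H_sub_D:
  fixes f g :: "real poly"
  assumes "\<forall>x. poly g x \<noteq> 0" "degree f \<le> degree g"
  shows "Fract f g \<in> D"
  using assms
proof (induction "degree g" arbitrary: f g rule: less_induct)
  case less
  show ?case
  proof (cases "degree g = 0")
    case True
    hence gf: "g = [:coeff g 0:]" by (rule deg0_form)
    have f0: "f = [:coeff f 0:]" using True less.prems by (intro deg0_form) simp
    have g0: "coeff g 0 \<noteq> 0" using less.prems(1) gf by (metis poly_pCons poly_0 add.right_neutral mult_zero_right)
    have "Fract f g = rc (coeff f 0 / coeff g 0)"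
    proof -
      have "[:coeff f 0:] = smult (coeff f 0 / coeff g 0) [:coeff g 0:]" using g0 by simp
      then show ?thesis unfolding rc_def using g0
        apply (subst eq_fract(1)) apply (subst gf, simp) apply simp
        by (metis f0 gf mult.right_neutral mult_smult_left mult.commute smult_one)
    qed
    then show ?thesis using D_rc by simp
  next
    case False
    then obtain s t g' where t: "t \<noteq> 0" and gW: "g = (1 + [:s,t:] * [:s,t:]) * g'"
      using quad_factor less.prems by blast
    define W where "W = 1 + [:s,t:] * [:s,t:]"
    have gW': "g = W * g'" using gW W_def by simp
    have degW: "degree W = 2"
    proof -
      have "degree ([:s,t:]*[:s,t:]) = 2" using t by (subst degree_mult_eq) auto
      then show ?thesis unfolding W_def by (subst degree_add_eq_right) auto
    qed
    hence W0: "W \<noteq> 0" by auto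
    have g'0: "g' \<noteq> 0" using gW' less.prems(1) by auto
    have dg: "degree g = 2 + degree g'" using gW' W0 g'0 degW by (simp add: degree_mult_eq)
    have nr': "\<forall>x. poly g' x \<noteq> 0" using less.prems(1) gW' by auto
    define S where "S = f div W"
    define R where "R = f mod W"
    have fd: "f = S * W + R" by (simp add: S_def R_def)
    have dR: "degree R \<le> 1" using degree_mod_less[OF W0, of f] degW R_def by auto
    have dS: "degree S \<le> degree g'"
    proof (cases "S = 0")
      case False
      have "degree (S * W) = degree S + 2" using False W0 degW by (simp add: degree_mult_eq)
      hence "degree f = degree S + 2" using fd dR by (subst fd, subst degree_add_eq_left) auto
      then show ?thesis using less.prems(2) dg by simp
    qed simp
    have "Fract f g = Fract S g' + Fract R W * Fract 1 g'"
      using W0 g'0 gW' apply simp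
      apply (subst eq_fract(1)) apply simp apply simp
      by (subst fd) (simp add: algebra_simps)
    moreover have "Fract S g' \<in> D" using less.hyps[of g' S] dg nr' dS by simp
    moreover have "Fract 1 g' \<in> D" using less.hyps[of g' 1] dg nr' by simp
    moreover have "Fract R W \<in> D" unfolding W_def using D_quad t dR by blast
    ultimately show ?thesis using D_add D_mult by metis
  qed
qed

definition bnd :: "ratfun \<Rightarrow> bool" where
  "bnd r \<longleftrightarrow> (\<exists>f g. g \<noteq> 0 \<and> r = Fract f g \<and> degree f \<le> degree g)"

lemma sos_deg:
  fixes f g :: "real poly"
  shows "degree (g*g) \<le> degree (g*g + f*f)"
proof (cases "g = 0")
  case False
  show ?thesis
  proof (cases "degree f \<le> degree g")
    case True
    have c: "coeff (g*g) (degree g + degree g) = lead_coeff g * lead_coeff g"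
      by (rule coeff_mult_degree_sum)
    have "coeff (f*f) (degree g + degree g) \<ge> 0"
    proof (cases "degree f = degree g")
      case True then show ?thesis using coeff_mult_degree_sum[of f f] by simp
    next
      case False
      then have "degree (f*f) < degree g + degree g"
        using True degree_mult_le[of f f] by linarith
      then show ?thesis by (simp add: coeff_eq_0)
    qed
    moreover have "lead_coeff g * lead_coeff g > 0" using False by (metis leading_coeff_0_iff not_real_square_gt_zero)
    ultimately have "coeff (g*g + f*f) (degree g + degree g) \<noteq> 0" using c by simp
    hence "degree g + degree g \<le> degree (g*g + f*f)" by (rule le_degree)
    then show ?thesis using degree_mult_le[of g g] by linarith
  next
    case F: False
    have f0: "f \<noteq> 0" using F by auto
    have "degree (g*g) < degree (f*f)" using F False f0 by (simp add: degree_mult_eq)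
    then show ?thesis by (subst degree_add_eq_right) auto
  qed
qed simp

lemma sos_nz:
  fixes f g :: "real poly"
  assumes "g \<noteq> 0" shows "g*g + f*f \<noteq> 0"
proof
  obtain x where "poly g x \<noteq> 0" using assms poly_all_0_iff_0 by blast
  moreover assume "g*g + f*f = 0"
  hence "poly (g*g + f*f) x = 0" by simp
  ultimately show False by (simp add: add_pos_nonneg)
qed

lemma D_bnd: "r \<in> D \<Longrightarrow> bnd r"
proof (induction rule: dress_ring.induct)
  case (int k)
  show ?case unfolding bnd_def
    by (rule exI[of _ "of_int k"], rule exI[of _ 1]) (simp add: of_int_fract of_int_poly)
next
  case (gen h)
  obtain f g where h: "h = Fract f g" "g \<noteq> 0" by (cases h) auto
  have "inverse (1 + h^2) = Fract (g*g) (g*g + f*f)"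
    using h by (simp add: power2_eq_square One_fract_def algebra_simps)
  then show ?case unfolding bnd_def using sos_deg[of g f] sos_nz[OF h(2), of f] by blast
next
  case (add a b)
  then obtain f1 g1 f2 g2 where a: "g1 \<noteq> 0" "a = Fract f1 g1" "degree f1 \<le> degree g1"
    and b: "g2 \<noteq> 0" "b = Fract f2 g2" "degree f2 \<le> degree g2" unfolding bnd_def by blast
  have "degree (f1 * g2 + f2 * g1) \<le> degree (g1 * g2)"
    using a b degree_add_le_max[of "f1*g2" "f2*g1"] degree_mult_le[of f1 g2] degree_mult_le[of f2 g1]
    by (simp add: degree_mult_eq)
  then show ?case unfolding bnd_def using a b by (intro exI[of _ "f1 * g2 + f2 * g1"] exI[of _ "g1*g2"]) simp
next
  case (neg a)
  then obtain f1 g1 where a: "g1 \<noteq> 0" "a = Fract f1 g1" "degree f1 \<le> degree g1" unfolding bnd_def by blast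
  then show ?case unfolding bnd_def by (intro exI[of _ "-f1"] exI[of _ g1]) simp
next
  case (mult a b)
  then obtain f1 g1 f2 g2 where a: "g1 \<noteq> 0" "a = Fract f1 g1" "degree f1 \<le> degree g1"
    and b: "g2 \<noteq> 0" "b = Fract f2 g2" "degree f2 \<le> degree g2" unfolding bnd_def by blast
  have "degree (f1 * f2) \<le> degree (g1 * g2)"
    using a b degree_mult_le[of f1 f2] by (simp add: degree_mult_eq)
  then show ?case unfolding bnd_def using a b by (intro exI[of _ "f1 * f2"] exI[of _ "g1*g2"]) simp
qed

lemma D_deg:
  assumes "Fract x g \<in> D" "g \<noteq> 0" "x \<noteq> 0"
  shows "degree x \<le> degree g"
proof -
  obtain f h where fh: "h \<noteq> 0" "Fract x g = Fract f h" "degree f \<le> degree h"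
    using D_bnd[OF assms(1)] unfolding bnd_def by blast
  hence e: "x * h = f * g" using assms by (simp add: eq_fract)
  hence "f \<noteq> 0" using assms fh by auto
  hence "degree x + degree h = degree f + degree g" using e assms fh
    by (metis degree_mult_eq)
  then show ?thesis using fh by linarith
qed

definition mk2 :: "'a::comm_ring_1 \<Rightarrow> 'a \<Rightarrow> 'a \<Rightarrow> 'a \<Rightarrow> 'a^2^2" where
  "mk2 a b c d = vector [vector [a,b], vector [c,d]]"

lemma mk2_nth [simp]: "mk2 a b c d $ 1 $ 1 = a" "mk2 a b c d $ 1 $ 2 = b"
  "mk2 a b c d $ 2 $ 1 = c" "mk2 a b c d $ 2 $ 2 = d"
  by (simp_all add: mk2_def)

lemma mk2_eq: "mk2 a b c d = mk2 a' b' c' d' \<longleftrightarrow> a = a' \<and> b = b' \<and> c = c' \<and> d = d'"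
  by (auto simp: vec_eq_iff forall_2)

lemma mk2_mult: "mk2 a b c d ** mk2 e f g h = mk2 (a*e+b*g) (a*f+b*h) (c*e+d*g) (c*f+d*h)"
  by (simp add: vec_eq_iff forall_2 matrix_matrix_mult_def sum_2)

lemma mat_over_mk2: "mat_over S (mk2 a b c d) \<longleftrightarrow> a \<in> S \<and> b \<in> S \<and> c \<in> S \<and> d \<in> S"
  by (simp add: mat_over_def forall_2)

lemma idem_rank1:
  assumes "w1 * m1 + w2 * m2 = (1::'a::comm_ring_1)"
  shows "idempotent_mat (mk2 (m1*w1) (m1*w2) (m2*w1) (m2*w2))"
proof -
  have "m1 * w1 * (m1 * w1) + m1 * w2 * (m2 * w1) = m1 * w1 * (w1 * m1 + w2 * m2)" by (simp add: algebra_simps)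
  moreover have "m1 * w1 * (m1 * w2) + m1 * w2 * (m2 * w2) = m1 * w2 * (w1 * m1 + w2 * m2)" by (simp add: algebra_simps)
  moreover have "m2 * w1 * (m1 * w1) + m2 * w2 * (m2 * w1) = m2 * w1 * (w1 * m1 + w2 * m2)" by (simp add: algebra_simps)
  moreover have "m2 * w1 * (m1 * w2) + m2 * w2 * (m2 * w2) = m2 * w2 * (w1 * m1 + w2 * m2)" by (simp add: algebra_simps)
  ultimately show ?thesis using assms unfolding idempotent_mat_def mk2_mult mk2_eq by simp
qed

lemma idem_tr1:
  assumes "a * a + c * d = (a::'a::comm_ring_1)"
  shows "idempotent_mat (mk2 a c d (1 - a))"
  unfolding idempotent_mat_def mk2_mult mk2_eq using assms
  by (simp add: algebra_simps)

lemma mk2_mat1: "(mat 1 :: 'a::comm_ring_1^2^2) = mk2 1 0 0 1"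
  by (simp add: vec_eq_iff forall_2 mat_def)

lemma target_mk2: "(vector [vector [p, q], vector [0, 0]] :: ratfun ^ 2 ^ 2) = mk2 p q 0 0"
  by (simp add: mk2_def)

lemma ptr: "poly_to_ratfun x / poly_to_ratfun g = Fract x g"
  by (simp add: poly_to_ratfun_def divide_fract)

lemma E11_idem: "idempotent_mat (mk2 (1::ratfun) 0 0 0)"
  using idem_tr1[of "1::ratfun" 0 0] by simp

lemma deg_aux:
  assumes "degree ([:-r,1:] * Q) \<le> n" "degree (z::real poly) \<le> 1"
  shows "degree (Q*z) \<le> n"
proof (cases "Q = 0")
  case False
  have "degree ([:-r,1:] * Q) = 1 + degree Q" using False by (subst degree_mult_eq) auto
  then show ?thesis using assms degree_mult_le[of Q z] by linarith
qed simp

theorem corollary3p4: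
  fixes x y \<gamma> :: "real poly" and p q :: ratfun
  assumes "degree x \<le> 1" and "degree y \<le> 1"
    and "\<forall>t::real. poly \<gamma> t \<noteq> 0"
    and "p = poly_to_ratfun x / poly_to_ratfun \<gamma>"
    and "q = poly_to_ratfun y / poly_to_ratfun \<gamma>"
    and "p \<in> dress_ring" and "q \<in> dress_ring"
  shows "prod_of_idempotents_over dress_ring
           (vector [vector [p, q], vector [0, 0]] :: ratfun ^ 2 ^ 2)"
proof -
  note dx = assms(1) and dy = assms(2) and nr = assms(3) and pD = assms(6) and qD = assms(7)
  have g0: "\<gamma> \<noteq> 0" using nr by auto
  have p: "p = Fract x \<gamma>" and q: "q = Fract y \<gamma>" using assms(4,5) ptr by simp_all
  show ?thesis unfolding target_mk2 prod_of_idempotents_over_def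
  proof (cases "\<exists>l. y = [:l:] * x")
    case True
    then obtain l where yl: "y = [:l:] * x" by blast
    define L where "L = rc l"
    have qL: "q = L * p" unfolding p q L_def rc_def yl by simp
    define b where "b = p - 1 + L"
    let ?E1 = "mk2 1 b 0 (0::ratfun)"
    let ?E2 = "mk2 (1 - L) ((1 - L) * L) 1 L"
    have i1: "idempotent_mat ?E1" using idem_rank1[of 1 1 b 0] by simp
    have i2: "idempotent_mat ?E2" using idem_rank1[of 1 "1 - L" L 1] by simp
    have o1: "mat_over D ?E1" unfolding mat_over_mk2 b_def L_def
      using pD D_rc D_0 D_1 D_add D_diff by blast
    have o2: "mat_over D ?E2" unfolding mat_over_mk2 L_def
      using D_rc D_0 D_1 D_mult D_diff by blast
    have "mk2 p q 0 0 = foldr (**) [?E1, ?E2] (mat 1)"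
      by (simp add: mk2_mat1 mk2_mult mk2_eq b_def qL algebra_simps)
    then show "\<exists>Es. Es \<noteq> [] \<and> (\<forall>E\<in>set Es. mat_over D E \<and> idempotent_mat E) \<and> mk2 p q 0 0 = foldr (**) Es (mat 1)"
      using i1 i2 o1 o2 by (intro exI[of _ "[?E1, ?E2]"]) auto
  next
    case notdep: False
    show "\<exists>Es. Es \<noteq> [] \<and> (\<forall>E\<in>set Es. mat_over D E \<and> idempotent_mat E) \<and> mk2 p q 0 0 = foldr (**) Es (mat 1)"
    proof (cases "x = 0")
      case True
      have p0: "p = 0" unfolding p True by (simp add: fract_collapse)
      let ?E1 = "mk2 1 q 0 (0::ratfun)"
      let ?E2 = "mk2 0 0 0 (1::ratfun)"
      have i1: "idempotent_mat ?E1" using idem_rank1[of 1 1 q 0] by simp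
      have i2: "idempotent_mat ?E2" using idem_rank1[of 0 0 1 1] by simp
      have "mk2 p q 0 0 = foldr (**) [?E1, ?E2] (mat 1)"
        by (simp add: mk2_mat1 mk2_mult mk2_eq p0)
      then show ?thesis using i1 i2 qD D_0 D_1
        by (intro exI[of _ "[?E1, ?E2]"]) (auto simp: mat_over_mk2)
    next
      case x0: False
      have y0: "y \<noteq> 0" using notdep by (metis mult_zero_left pCons_0_0)
      obtain r where yr: "poly y r \<noteq> 0" using y0 poly_all_0_iff_0 by blast
      have dg: "degree \<gamma> \<ge> 1"
      proof (cases "degree x = 0 \<and> degree y = 0")
        case True
        hence xf: "x = [:coeff x 0:]" and yf: "y = [:coeff y 0:]" by (simp_all add: deg0_form)
        have "coeff x 0 \<noteq> 0" using x0 xf by (metis pCons_0_0)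
        hence "[:coeff y 0 / coeff x 0:] * [:coeff x 0:] = [:coeff y 0:]" by simp
        hence "y = [:coeff y 0 / coeff x 0:] * x" using xf yf by simp
        then show ?thesis using notdep by blast
      next
        case False
        hence "degree x \<noteq> 0 \<or> degree y \<noteq> 0" by simp
        then show ?thesis
        proof
          assume "degree x \<noteq> 0"
          moreover have "degree x \<le> degree \<gamma>" using D_deg[of x \<gamma>] pD p g0 x0 by simp
          ultimately show ?thesis by simp
        next
          assume "degree y \<noteq> 0"
          moreover have "degree y \<le> degree \<gamma>" using D_deg[of y \<gamma>] qD q g0 y0 by simp
          ultimately show ?thesis by simp
        qed
      qed
      have gr: "poly \<gamma> r \<noteq> 0" using nr by simp
      define a where "a = poly x r / poly \<gamma> r"
      define c where "c = poly y r / poly \<gamma> r"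
      have c0: "c \<noteq> 0" using yr gr by (simp add: c_def)
      define l where "l = [:c:] * x - [:a:] * y"
      have l0: "l \<noteq> 0"
      proof
        assume "l = 0"
        hence e: "[:c:] * x = [:a:] * y" by (simp add: l_def)
        show False
        proof (cases "a = 0")
          case True then show False using e c0 x0 by simp
        next
          case False
          have "[:1/a:] * ([:c:] * x) = [:1/a:] * ([:a:] * y)" using e by simp
          hence "y = [:c/a:] * x" using False by simp
          then show False using notdep by blast
        qed
      qed
      have "poly l r = 0" using gr by (simp add: l_def a_def c_def field_simps)
      then obtain L where lL: "l = [:-r,1:] * L" using poly_eq_0_iff_dvd by (metis dvdE)
      have L0: "L \<noteq> 0" using l0 lL by auto
      have "degree l \<le> 1" unfolding l_def
        by (rule degree_diff_le; rule order.trans[OF degree_mult_le]; use dx dy in simp)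
      moreover have "degree l = 1 + degree L" using lL L0 by (subst lL, subst degree_mult_eq) auto
      ultimately have "degree L = 0" by simp
      hence Lk: "L = [:coeff L 0:]" by (rule deg0_form)
      define k where "k = coeff L 0"
      have k0: "k \<noteq> 0" using L0 Lk k_def by (metis pCons_0_0)
      have lk: "l = [:-r,1:] * [:k:]" using lL Lk k_def by simp
      define N1 where "N1 = [:c:] * \<gamma> - y"
      define N2 where "N2 = x - [:a:] * \<gamma>"
      have "poly N1 r = 0" using gr by (simp add: N1_def c_def)
      then obtain Q1 where Q1: "N1 = [:-r,1:] * Q1" using poly_eq_0_iff_dvd by (metis dvdE)
      have "poly N2 r = 0" using gr by (simp add: N2_def a_def)
      then obtain Q2 where Q2: "N2 = [:-r,1:] * Q2" using poly_eq_0_iff_dvd by (metis dvdE)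
      have rX0: "[:-r,1:] \<noteq> (0::real poly)" by simp
      have "[:-r,1:] * (x*Q1 + y*Q2) = x * N1 + y * N2" by (simp add: Q1 Q2 algebra_simps)
      also have "\<dots> = \<gamma> * l" by (simp add: N1_def N2_def l_def algebra_simps)
      also have "\<dots> = [:-r,1:] * ([:k:] * \<gamma>)" by (simp add: lk algebra_simps)
      finally have I1: "x*Q1 + y*Q2 = [:k:] * \<gamma>" using mult_left_cancel[OF rX0] by blast
      have "[:-r,1:] * ([:a:]*Q1 + [:c:]*Q2) = [:a:] * N1 + [:c:] * N2" by (simp add: Q1 Q2 algebra_simps)
      also have "\<dots> = l" by (simp add: N1_def N2_def l_def algebra_simps)
      also have "\<dots> = [:-r,1:] * [:k:]" by (simp add: lk)
      finally have I2: "[:a:]*Q1 + [:c:]*Q2 = [:k:]" using mult_left_cancel[OF rX0] by blast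
      define G' where "G' = [:k:] * \<gamma>"
      have G'0: "G' \<noteq> 0" using k0 g0 by (simp add: G'_def)
      have G'nr: "\<forall>t. poly G' t \<noteq> 0" using k0 nr by (simp add: G'_def)
      have dG': "degree G' = degree \<gamma>" using k0 by (simp add: G'_def)
      have dN1: "degree N1 \<le> degree \<gamma>" unfolding N1_def
        by (rule degree_diff_le; use dg dy degree_mult_le[of "[:c:]" \<gamma>] in simp)
      have dN2: "degree N2 \<le> degree \<gamma>" unfolding N2_def
        by (rule degree_diff_le; use dg dx degree_mult_le[of "[:a:]" \<gamma>] in simp)
      define m1 where "m1 = Fract Q1 G'"
      define m2 where "m2 = Fract Q2 G'"
      define w1 where "w1 = Fract x 1"
      define w2 where "w2 = Fract y 1"
      have "w1 * m1 + w2 * m2 = Fract (x*Q1) G' + Fract (y*Q2) G'"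
        by (simp only: w1_def w2_def m1_def m2_def mult_fract mult_1_left)
      also have "\<dots> = Fract (x*Q1 + y*Q2) G'" by (rule fract_add_same[OF G'0])
      also have "\<dots> = Fract G' G'" using I1 by (simp add: G'_def)
      also have "\<dots> = 1" using G'0 by (simp add: One_fract_def eq_fract)
      finally have wm: "w1 * m1 + w2 * m2 = 1" .
      have "rc a * m1 + rc c * m2 = Fract ([:a:]*Q1) G' + Fract ([:c:]*Q2) G'"
        by (simp only: rc_mult_fract m1_def m2_def)
      also have "\<dots> = Fract ([:a:]*Q1 + [:c:]*Q2) G'" by (rule fract_add_same[OF G'0])
      also have "\<dots> = Fract ([:k:] * 1) ([:k:] * \<gamma>)" using I2 by (simp add: G'_def)
      also have "\<dots> = Fract 1 \<gamma>" using k0 by (intro mult_fract_cancel) simp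
      finally have S: "rc a * m1 + rc c * m2 = Fract 1 \<gamma>" .
      define d where "d = a * (1 - a) / c"
      have "a * a + c * d = a" using c0 by (simp add: d_def field_simps)
      hence "rc a * rc a + rc c * rc d = rc a" by (metis rc_mult rc_add)
      hence iG: "idempotent_mat (mk2 (rc a) (rc c) (rc d) (1 - rc a))" by (rule idem_tr1)
      have iE: "idempotent_mat (mk2 (m1 * w1) (m1 * w2) (m2 * w1) (m2 * w2))"
        using idem_rank1[OF wm] .
      have oG: "mat_over D (mk2 (rc a) (rc c) (rc d) (1 - rc a))"
        unfolding mat_over_mk2 using D_rc D_1 D_diff by blast
      have ent: "Fract (Q * z) G' \<in> D" if "degree ([:-r,1:] * Q) \<le> degree \<gamma>" "degree z \<le> 1" for Q z
        using H_sub_D[OF G'nr] deg_aux[OF that] dG' by simp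
      have oE: "mat_over D (mk2 (m1 * w1) (m1 * w2) (m2 * w1) (m2 * w2))"
        unfolding mat_over_mk2 m1_def m2_def w1_def w2_def mult_fract mult_1_right
        using ent dN1 dN2 dx dy Q1 Q2 by auto
      have oE1: "mat_over D (mk2 1 0 0 0)" unfolding mat_over_mk2 using D_0 D_1 by blast
      have pe: "rc a * (m1 * w1) + rc c * (m2 * w1) = p"
      proof -
        have "rc a * (m1 * w1) + rc c * (m2 * w1) = (rc a * m1 + rc c * m2) * w1" by (simp add: algebra_simps)
        then show ?thesis using S by (simp add: p w1_def)
      qed
      have qe: "rc a * (m1 * w2) + rc c * (m2 * w2) = q"
      proof -
        have "rc a * (m1 * w2) + rc c * (m2 * w2) = (rc a * m1 + rc c * m2) * w2" by (simp add: algebra_simps)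
        then show ?thesis using S by (simp add: q w2_def)
      qed
      let ?Es = "[mk2 1 0 0 0, mk2 (rc a) (rc c) (rc d) (1 - rc a), mk2 (m1 * w1) (m1 * w2) (m2 * w1) (m2 * w2)]"
      have "mk2 p q 0 0 = foldr (**) ?Es (mat 1)"
        by (simp add: mk2_mat1 mk2_mult mk2_eq pe qe)
      then show ?thesis using iG iE oG oE oE1 E11_idem by (intro exI[of _ ?Es]) auto
    qed
  qed
qed

end
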